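(* Let $X$ be a gamble and $\varepsilon>0$. Let $\underline{P}$ be a coherent lower prevision on a set of gambles as specified below, with conjugate $\overline{P}$, let $\underline{Q}$ be any coherent lower prevision on the linear space of all gambles extending $\underline{P}$, and let $\underline{V}(X)=\min_{c\in\mathbb{R}}\underline{Q}((X-c)^2)$ and $\overline{V}(X)=\min_{c\in\mathbb{R}}\overline{Q}((X-c)^2)$ be the lower and upper variances of $X$. (a) If $\underline{P}$ is coherent on $\{X,-X,I_{(X\le\underline{P}(X)-\varepsilon)},I_{(X\le\overline{P}(X)-\varepsilon)}\}$, then $$\underline{P}(X\le\overline{P}(X)-\varepsilon)\le\frac{\overline{V}(X)}{\overline{V}(X)+\varepsilon^2},\qquad \underline{P}(X\le\underline{P}(X)-\varepsilon)\le\frac{\underline{V}(X)}{\underline{V}(X)+\varepsilon^2}.$$ (b) If $\underline{P}$ is coherent on $\{X,-X,I_{(X\ge\underline{P}(X)+\varepsilon)},I_{(X\ge\overline{P}(X)+\varepsilon)}\}$, then $$\underline{P}(X\ge\underline{P}(X)+\varepsilon)\le\frac{\overline{V}(X)}{\overline{V}(X)+\varepsilon^2},\qquad \underline{P}(X\ge\overline{P}(X)+\varepsilon)\le\frac{\underline{V}(X)}{\underline{V}(X)+\varepsilon^2}.$$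
   Context: $\Pi$ is a partition of the sure event into pairwise disjoint non-impossible events; a gamble is a bounded map $X:\Pi\to\mathbb{R}$; $(X\le a)$, $(X\ge a)$ are events with indicators, and $\underline{P}(X\le a)=\underline{P}(I_{(X\le a)})$. A map $P:\mathcal{D}\to\mathbb{R}$ is a dF-coherent prevision iff for all $n\in\mathbb{N}$, $s_0,\dots,s_n\in\mathbb{R}$, $X_0,\dots,X_n\in\mathcal{D}$, $\sup\sum_{i=0}^n s_i(X_i-P(X_i))\ge 0$. A lower prevision $\underline{P}:\mathcal{D}\to\mathbb{R}$ is coherent iff there is a nonempty set of dF-coherent previsions on $\mathcal{D}$ whose pointwise infimum is $\underline{P}$; every coherent lower prevision on $\mathcal{D}$ has a coherent extension to all gambles. Conjugates: $\overline{P}(Y)=-\underline{P}(-Y)$, $\overline{Q}(Y)=-\underline{Q}(-Y)$. The minima defining $\underline{V}(X),\overline{V}(X)$ are attained (Walley). *)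

theory Defs
  imports Main "HOL-Analysis.Analysis"
begin

text \<open>The partition Pi is modelled by the type 'w of its atoms. A gamble is a bounded
real-valued map on Pi.\<close>

definition gamble :: "('w \<Rightarrow> real) \<Rightarrow> bool" where
  "gamble X \<longleftrightarrow> (\<exists>B. \<forall>w. \<bar>X w\<bar> \<le> B)"

definition ind_le :: "('w \<Rightarrow> real) \<Rightarrow> real \<Rightarrow> ('w \<Rightarrow> real)" where
  "ind_le X a = (\<lambda>w. if X w \<le> a then 1 else 0)"

definition ind_ge :: "('w \<Rightarrow> real) \<Rightarrow> real \<Rightarrow> ('w \<Rightarrow> real)" where
  "ind_ge X a = (\<lambda>w. if X w \<ge> a then 1 else 0)"

definition dF_coherent :: "('w \<Rightarrow> real) set \<Rightarrow> (('w \<Rightarrow> real) \<Rightarrow> real) \<Rightarrow> bool" where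
  "dF_coherent D P \<longleftrightarrow>
     (\<forall>(n::nat) (s::nat \<Rightarrow> real) (Xs::nat \<Rightarrow> ('w \<Rightarrow> real)).
        (\<forall>i\<le>n. Xs i \<in> D) \<longrightarrow>
        (SUP w. \<Sum>i\<le>n. s i * (Xs i w - P (Xs i))) \<ge> 0)"

definition coherent_lp :: "('w \<Rightarrow> real) set \<Rightarrow> (('w \<Rightarrow> real) \<Rightarrow> real) \<Rightarrow> bool" where
  "coherent_lp D LP \<longleftrightarrow>
     (\<exists>M. M \<noteq> {} \<and> (\<forall>P\<in>M. dF_coherent D P) \<and>
          (\<forall>Y\<in>D. LP Y = (INF P\<in>M. P Y)))"

definition upper :: "(('w \<Rightarrow> real) \<Rightarrow> real) \<Rightarrow> ('w \<Rightarrow> real) \<Rightarrow> real" where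
  "upper LP Y = - LP (\<lambda>w. - Y w)"

text \<open>Lower and upper variances (the minima are attained, so they equal the infima).\<close>

definition lower_var :: "(('w \<Rightarrow> real) \<Rightarrow> real) \<Rightarrow> ('w \<Rightarrow> real) \<Rightarrow> real" where
  "lower_var LQ X = (INF c. LQ (\<lambda>w. (X w - c)\<^sup>2))"

definition upper_var :: "(('w \<Rightarrow> real) \<Rightarrow> real) \<Rightarrow> ('w \<Rightarrow> real) \<Rightarrow> real" where
  "upper_var LQ X = (INF c. upper LQ (\<lambda>w. (X w - c)\<^sup>2))"

end

theory Submission
  imports Defs
begin



lemma dF_bound3:
  assumes P: "dF_coherent D P" and D: "Y1 \<in> D" "Y2 \<in> D" "Y3 \<in> D"
    and pw: "\<And>w. a * Y1 w + b * Y2 w + c * Y3 w \<le> k"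
  shows "a * P Y1 + b * P Y2 + c * P Y3 \<le> k"
proof -
  define Xs where "Xs = (\<lambda>i::nat. [Y1, Y2, Y3] ! i)"
  define s where "s = (\<lambda>i::nat. [a, b, c] ! i)"
  have "\<forall>i\<le>2. Xs i \<in> D" using D by (auto simp: Xs_def le_Suc_eq numeral_2_eq_2)
  with P have "(SUP w. \<Sum>i\<le>2. s i * (Xs i w - P (Xs i))) \<ge> 0"
    unfolding dF_coherent_def by blast
  moreover have "(SUP w. \<Sum>i\<le>2. s i * (Xs i w - P (Xs i))) \<le> k - (a * P Y1 + b * P Y2 + c * P Y3)"
  proof (rule cSUP_least)
    fix w
    show "(\<Sum>i\<le>2. s i * (Xs i w - P (Xs i))) \<le> k - (a * P Y1 + b * P Y2 + c * P Y3)"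
      using pw[of w] by (simp add: Xs_def s_def numeral_2_eq_2 algebra_simps)
  qed simp
  ultimately show ?thesis by linarith
qed

lemma dF_bound1:
  assumes P: "dF_coherent D P" and D: "Y \<in> D"
    and pw: "\<And>w. a * Y w \<le> k"
  shows "a * P Y \<le> k"
  using dF_bound3[OF P D D D, of a 0 0 k] pw by simp

lemma gamble_ind_le: "gamble (ind_le X a)"
  unfolding gamble_def ind_le_def by (rule exI[of _ 1]) auto

lemma gamble_ind_ge: "gamble (ind_ge X a)"
  unfolding gamble_def ind_ge_def by (rule exI[of _ 1]) auto

lemma gamble_neg: "gamble X \<Longrightarrow> gamble (\<lambda>w. - X w)"
  unfolding gamble_def by auto

lemma gamble_sq: assumes "gamble X" shows "gamble (\<lambda>w. (X w - c)^2)"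
proof -
  obtain B where B: "\<forall>w. \<bar>X w\<bar> \<le> B" using assms unfolding gamble_def by blast
  have "\<bar>(X w - c)^2\<bar> \<le> (B + \<bar>c\<bar>)^2" for w
  proof -
    have "\<bar>X w - c\<bar> \<le> B + \<bar>c\<bar>" using B[rule_format, of w] by linarith
    then have "\<bar>X w - c\<bar>^2 \<le> (B + \<bar>c\<bar>)^2" by (rule power_mono) simp
    then show ?thesis by simp
  qed
  then show ?thesis unfolding gamble_def by blast
qed

lemma gamble_sq0: assumes "gamble X" shows "gamble (\<lambda>w. (X w)^2)"
  using gamble_sq[OF assms, of 0] by simp

lemma P_lb:
  assumes P: "dF_coherent {Y. gamble Y} P" and Y: "gamble Y" and B: "\<forall>w. \<bar>Y w\<bar> \<le> B"
  shows "- B \<le> P Y"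
proof -
  have "(-1) * P Y \<le> B"
    by (rule dF_bound1[OF P]) (use Y B in \<open>auto simp: abs_le_iff\<close>)
  then show ?thesis by simp
qed

lemma P_nonneg:
  assumes P: "dF_coherent {Y. gamble Y} P" and Y: "gamble Y" and nn: "\<forall>w. Y w \<ge> 0"
  shows "0 \<le> P Y"
proof -
  have "(-1) * P Y \<le> 0"
    by (rule dF_bound1[OF P]) (use Y nn in auto)
  then show ?thesis by simp
qed

lemma P_neg:
  assumes P: "dF_coherent {Y. gamble Y} P" and Y: "gamble Y"
  shows "P (\<lambda>w. - Y w) = - P Y"
proof -
  have g: "(\<lambda>w. - Y w) \<in> {Y. gamble Y}" "Y \<in> {Y. gamble Y}" using Y gamble_neg by auto
  have "1 * P (\<lambda>w. - Y w) + 1 * P Y + 0 * P Y \<le> 0"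
    by (rule dF_bound3[OF P g(1) g(2) g(2)]) simp
  moreover have "(-1) * P (\<lambda>w. - Y w) + (-1) * P Y + 0 * P Y \<le> 0"
    by (rule dF_bound3[OF P g(1) g(2) g(2)]) simp
  ultimately show ?thesis by linarith
qed

lemma var_le:
  assumes P: "dF_coherent {Y. gamble Y} P" and X: "gamble X"
  shows "P (\<lambda>w. (X w)^2) - (P X)^2 \<le> P (\<lambda>w. (X w - c)^2)"
proof -
  have g: "(\<lambda>w. (X w - c)^2) \<in> {Y. gamble Y}" "(\<lambda>w. (X w)^2) \<in> {Y. gamble Y}" "X \<in> {Y. gamble Y}"
    using X gamble_sq gamble_sq0 by auto
  have "(-1) * P (\<lambda>w. (X w - c)^2) + 1 * P (\<lambda>w. (X w)^2) + (-2*c) * P X \<le> -(c^2)"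
    by (rule dF_bound3[OF P g]) (simp add: power2_eq_square algebra_simps)
  moreover have "0 \<le> (P X - c)^2" by simp
  ultimately show ?thesis by (simp add: power2_eq_square algebra_simps)
qed

lemma cantelli_le:
  assumes P: "dF_coherent {Y. gamble Y} P" and X: "gamble X" and t: "t > 0" "u \<ge> 0"
    and a: "a + t \<le> P X"
  shows "P (ind_le X a) \<le> (P (\<lambda>w. (X w)^2) - (P X)^2 + u^2) / (t+u)^2"
proof -
  define m where "m = P X + u"
  have g: "ind_le X a \<in> {Y. gamble Y}" "(\<lambda>w. (X w)^2) \<in> {Y. gamble Y}" "X \<in> {Y. gamble Y}"
    using X gamble_sq0 gamble_ind_le by auto
  have "(t+u)^2 * P (ind_le X a) + (-1) * P (\<lambda>w. (X w)^2) + (2*m) * P X \<le> m^2"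
  proof (rule dF_bound3[OF P g])
    fix w
    have "(t+u)^2 * ind_le X a w \<le> (m - X w)^2"
    proof (cases "X w \<le> a")
      case True
      have "(t+u)^2 \<le> (m - X w)^2" by (rule power_mono) (use True a t m_def in auto)
      then show ?thesis using True by (simp add: ind_le_def)
    qed (simp add: ind_le_def)
    then show "(t+u)^2 * ind_le X a w + (-1) * (X w)^2 + (2*m) * X w \<le> m^2"
      by (simp add: power2_eq_square algebra_simps)
  qed
  then have "(t+u)^2 * P (ind_le X a) \<le> P (\<lambda>w. (X w)^2) - (P X)^2 + u^2"
    by (simp add: m_def power2_eq_square algebra_simps)
  moreover have "(t+u)^2 > 0" using t by simp
  ultimately show ?thesis by (simp add: pos_le_divide_eq mult.commute)
qed

lemma cantelli_ge:
  assumes P: "dF_coherent {Y. gamble Y} P" and X: "gamble X" and t: "t > 0" "u \<ge> 0"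
    and a: "P X + t \<le> a"
  shows "P (ind_ge X a) \<le> (P (\<lambda>w. (X w)^2) - (P X)^2 + u^2) / (t+u)^2"
proof -
  define m where "m = P X - u"
  have g: "ind_ge X a \<in> {Y. gamble Y}" "(\<lambda>w. (X w)^2) \<in> {Y. gamble Y}" "X \<in> {Y. gamble Y}"
    using X gamble_sq0 gamble_ind_ge by auto
  have "(t+u)^2 * P (ind_ge X a) + (-1) * P (\<lambda>w. (X w)^2) + (2*m) * P X \<le> m^2"
  proof (rule dF_bound3[OF P g])
    fix w
    have "(t+u)^2 * ind_ge X a w \<le> (X w - m)^2"
    proof (cases "X w \<ge> a")
      case True
      have "(t+u)^2 \<le> (X w - m)^2" by (rule power_mono) (use True a t m_def in auto)
      then show ?thesis using True by (simp add: ind_ge_def)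
    qed (simp add: ind_ge_def)
    then show "(t+u)^2 * ind_ge X a w + (-1) * (X w)^2 + (2*m) * X w \<le> m^2"
      by (simp add: power2_eq_square algebra_simps)
  qed
  then have "(t+u)^2 * P (ind_ge X a) \<le> P (\<lambda>w. (X w)^2) - (P X)^2 + u^2"
    by (simp add: m_def power2_eq_square algebra_simps)
  moreover have "(t+u)^2 > 0" using t by simp
  ultimately show ?thesis by (simp add: pos_le_divide_eq mult.commute)
qed

lemma lim_le:
  fixes h :: "real \<Rightarrow> real"
  assumes d: "d > 0" and le: "\<And>\<delta>. 0 < \<delta> \<Longrightarrow> \<delta> < d \<Longrightarrow> L \<le> h \<delta>"
    and lim: "(h \<longlongrightarrow> h 0) (at_right 0)"
  shows "L \<le> h 0"
proof (rule tendsto_le[OF trivial_limit_at_right_real lim tendsto_const])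
  show "\<forall>\<^sub>F x in at_right 0. L \<le> h x"
    using eventually_at_right_real[OF d] by (rule eventually_mono) (auto intro: le)
qed

lemma f_ident:
  fixes V e :: real assumes "V \<ge> 0" "e > 0"
  shows "(V + (V/e)^2) / (e + V/e)^2 = V / (V + e^2)"
proof -
  have e: "e \<noteq> 0" using assms by simp
  have 1: "V + (V/e)^2 = V * (V + e^2) / e^2" using e by (simp add: field_simps power2_eq_square)
  have 2: "(e + V/e)^2 = (V + e^2)^2 / e^2" using e by (simp add: field_simps power2_eq_square)
  have 3: "V + e^2 > 0" using assms by (simp add: add_nonneg_pos)
  show ?thesis unfolding 1 2 using e 3 by (simp add: power2_eq_square)
qed


context
  fixes M :: "(('w \<Rightarrow> real) \<Rightarrow> real) set" and LQ :: "('w \<Rightarrow> real) \<Rightarrow> real"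
  assumes Mne: "M \<noteq> {}" and Mdf: "\<forall>P\<in>M. dF_coherent {Y. gamble Y} P"
    and LQdef: "\<forall>Y\<in>{Y. gamble Y}. LQ Y = (INF P\<in>M. P Y)"
begin

lemma bdd: "gamble Y \<Longrightarrow> bdd_below ((\<lambda>P. P Y) ` M)"
proof -
  assume Y: "gamble Y"
  then obtain B where B: "\<forall>w. \<bar>Y w\<bar> \<le> B" unfolding gamble_def by blast
  show ?thesis unfolding bdd_below_def using P_lb[OF _ Y B] Mdf by blast
qed

lemma LQ_le: "gamble Y \<Longrightarrow> P \<in> M \<Longrightarrow> LQ Y \<le> P Y"
  using LQdef bdd by (auto intro: cINF_lower)

lemma LQ_approx: "gamble Y \<Longrightarrow> \<delta> > 0 \<Longrightarrow> \<exists>P\<in>M. P Y < LQ Y + \<delta>"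
proof -
  assume Y: "gamble Y" and d: "\<delta> > 0"
  have "(INF P\<in>M. P Y) < LQ Y + \<delta>" using LQdef Y d by simp
  then show ?thesis using cINF_less_iff[OF Mne bdd[OF Y]] by blast
qed

lemma up_ge: "gamble Y \<Longrightarrow> P \<in> M \<Longrightarrow> P Y \<le> upper LQ Y"
  using LQ_le[OF gamble_neg, of Y P] P_neg[of P Y] Mdf by (auto simp: upper_def)

lemma up_approx: "gamble Y \<Longrightarrow> \<delta> > 0 \<Longrightarrow> \<exists>P\<in>M. upper LQ Y - \<delta> < P Y"
proof -
  assume Y: "gamble Y" and d: "\<delta> > 0"
  obtain P where P: "P \<in> M" "P (\<lambda>w. - Y w) < LQ (\<lambda>w. - Y w) + \<delta>"
    using LQ_approx[OF gamble_neg[OF Y] d] by blast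
  have "P (\<lambda>w. - Y w) = - P Y" using P_neg[of P Y] Mdf Y P by blast
  then have "upper LQ Y - \<delta> < P Y" using P by (simp add: upper_def)
  then show ?thesis using P by blast
qed

lemma LQ_nonneg: "gamble Y \<Longrightarrow> \<forall>w. Y w \<ge> 0 \<Longrightarrow> 0 \<le> LQ Y"
proof -
  assume Y: "gamble Y" and nn: "\<forall>w. Y w \<ge> 0"
  have "0 \<le> (INF P\<in>M. P Y)"
    by (rule cINF_greatest[OF Mne]) (use Mdf P_nonneg Y nn in blast)
  then show ?thesis using LQdef Y by simp
qed

lemma uvar: assumes X: "gamble X" and P: "P \<in> M"
  shows "P (\<lambda>w. (X w)^2) - (P X)^2 \<le> upper_var LQ X"
  unfolding upper_var_def
proof (rule cINF_greatest)
  fix c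
  show "P (\<lambda>w. (X w)^2) - (P X)^2 \<le> upper LQ (\<lambda>w. (X w - c)\<^sup>2)"
    using var_le[of P X c] up_ge[OF gamble_sq[OF X] P, of c] Mdf P X by force
qed simp

lemma uvar_nn: assumes X: "gamble X" shows "upper_var LQ X \<ge> 0"
  unfolding upper_var_def
proof (rule cINF_greatest)
  fix c
  obtain P where P: "P \<in> M" using Mne by blast
  show "0 \<le> upper LQ (\<lambda>w. (X w - c)\<^sup>2)"
  proof -
    have "dF_coherent {Y. gamble Y} P" using Mdf P by blast
    then have "0 \<le> P (\<lambda>w. (X w - c)\<^sup>2)" using P_nonneg[OF _ gamble_sq[OF X]] by simp
    then show ?thesis using up_ge[OF gamble_sq[OF X] P, of c] by linarith
  qed
qed simp

lemma lvar_nn: assumes X: "gamble X" shows "lower_var LQ X \<ge> 0"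
  unfolding lower_var_def
  by (rule cINF_greatest) (auto intro!: LQ_nonneg gamble_sq X)

lemma lvar_approx: assumes X: "gamble X" and d: "\<delta> > 0"
  shows "\<exists>c. LQ (\<lambda>w. (X w - c)^2) < lower_var LQ X + \<delta>"
proof -
  have b: "bdd_below ((\<lambda>c. LQ (\<lambda>w. (X w - c)^2)) ` UNIV)"
    unfolding bdd_below_def by (auto intro!: exI[of _ 0] LQ_nonneg gamble_sq X)
  have "lower_var LQ X < lower_var LQ X + \<delta>" using d by simp
  then have "(INF c. LQ (\<lambda>w. (X w - c)^2)) < lower_var LQ X + \<delta>" unfolding lower_var_def .
  then show ?thesis using cINF_less_iff[OF _ b] by blast
qed


lemma claimA1: assumes X: "gamble X" and e: "\<epsilon> > 0"
  shows "LQ (ind_le X (upper LQ X - \<epsilon>)) \<le> upper_var LQ X / (upper_var LQ X + \<epsilon>\<^sup>2)"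
proof -
  define V where "V = upper_var LQ X"
  define u where "u = V / \<epsilon>"
  have V0: "V \<ge> 0" using uvar_nn[OF X] V_def by simp
  have u0: "u \<ge> 0" using V0 e u_def by simp
  define h where "h = (\<lambda>\<delta>. (V + u^2) / (\<epsilon> - \<delta> + u)^2)"
  have "LQ (ind_le X (upper LQ X - \<epsilon>)) \<le> h 0"
  proof (rule lim_le[OF e])
    fix \<delta> :: real assume d: "0 < \<delta>" "\<delta> < \<epsilon>"
    obtain P where P: "P \<in> M" "upper LQ X - \<delta> < P X" using up_approx[OF X d(1)] by blast
    have Pd: "dF_coherent {Y. gamble Y} P" using Mdf P by blast
    have "LQ (ind_le X (upper LQ X - \<epsilon>)) \<le> P (ind_le X (upper LQ X - \<epsilon>))"
      by (rule LQ_le[OF gamble_ind_le P(1)])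
    also have "\<dots> \<le> (P (\<lambda>w. (X w)^2) - (P X)^2 + u^2) / (\<epsilon> - \<delta> + u)^2"
      by (rule cantelli_le[OF Pd X _ u0]) (use d P in auto)
    also have "\<dots> \<le> h \<delta>" unfolding h_def
      by (rule divide_right_mono) (use uvar[OF X P(1)] V_def in auto)
    finally show "LQ (ind_le X (upper LQ X - \<epsilon>)) \<le> h \<delta>" .
  next
    have "(h \<longlongrightarrow> h 0) (at 0)" unfolding h_def
      by (intro tendsto_intros) (use e u0 in auto)
    then show "(h \<longlongrightarrow> h 0) (at_right 0)" using filterlim_at_split by blast
  qed
  also have "h 0 = V / (V + \<epsilon>^2)" unfolding h_def u_def using f_ident[OF V0 e] by simp
  finally show ?thesis unfolding V_def .
qed

lemma claimB1: assumes X: "gamble X" and e: "\<epsilon> > 0"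
  shows "LQ (ind_ge X (LQ X + \<epsilon>)) \<le> upper_var LQ X / (upper_var LQ X + \<epsilon>\<^sup>2)"
proof -
  define V where "V = upper_var LQ X"
  define u where "u = V / \<epsilon>"
  have V0: "V \<ge> 0" using uvar_nn[OF X] V_def by simp
  have u0: "u \<ge> 0" using V0 e u_def by simp
  define h where "h = (\<lambda>\<delta>. (V + u^2) / (\<epsilon> - \<delta> + u)^2)"
  have "LQ (ind_ge X (LQ X + \<epsilon>)) \<le> h 0"
  proof (rule lim_le[OF e])
    fix \<delta> :: real assume d: "0 < \<delta>" "\<delta> < \<epsilon>"
    obtain P where P: "P \<in> M" "P X < LQ X + \<delta>" using LQ_approx[OF X d(1)] by blast
    have Pd: "dF_coherent {Y. gamble Y} P" using Mdf P by blast
    have "LQ (ind_ge X (LQ X + \<epsilon>)) \<le> P (ind_ge X (LQ X + \<epsilon>))"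
      by (rule LQ_le[OF gamble_ind_ge P(1)])
    also have "\<dots> \<le> (P (\<lambda>w. (X w)^2) - (P X)^2 + u^2) / (\<epsilon> - \<delta> + u)^2"
      by (rule cantelli_ge[OF Pd X _ u0]) (use d P in auto)
    also have "\<dots> \<le> h \<delta>" unfolding h_def
      by (rule divide_right_mono) (use uvar[OF X P(1)] V_def in auto)
    finally show "LQ (ind_ge X (LQ X + \<epsilon>)) \<le> h \<delta>" .
  next
    have "(h \<longlongrightarrow> h 0) (at 0)" unfolding h_def
      by (intro tendsto_intros) (use e u0 in auto)
    then show "(h \<longlongrightarrow> h 0) (at_right 0)" using filterlim_at_split by blast
  qed
  also have "h 0 = V / (V + \<epsilon>^2)" unfolding h_def u_def using f_ident[OF V0 e] by simp
  finally show ?thesis unfolding V_def .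
qed

lemma claimA2: assumes X: "gamble X" and e: "\<epsilon> > 0"
  shows "LQ (ind_le X (LQ X - \<epsilon>)) \<le> lower_var LQ X / (lower_var LQ X + \<epsilon>\<^sup>2)"
proof -
  define V where "V = lower_var LQ X"
  define u where "u = V / \<epsilon>"
  have V0: "V \<ge> 0" using lvar_nn[OF X] V_def by simp
  have u0: "u \<ge> 0" using V0 e u_def by simp
  define h where "h = (\<lambda>\<delta>. (V + \<delta> + \<delta> + u^2) / (\<epsilon> + u)^2)"
  have "LQ (ind_le X (LQ X - \<epsilon>)) \<le> h 0"
  proof (rule lim_le[OF e])
    fix \<delta> :: real assume d: "0 < \<delta>" "\<delta> < \<epsilon>"
    obtain c where c: "LQ (\<lambda>w. (X w - c)^2) < V + \<delta>" using lvar_approx[OF X d(1)] V_def by blast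
    obtain P where P: "P \<in> M" "P (\<lambda>w. (X w - c)^2) < LQ (\<lambda>w. (X w - c)^2) + \<delta>"
      using LQ_approx[OF gamble_sq[OF X] d(1)] by blast
    have Pd: "dF_coherent {Y. gamble Y} P" using Mdf P by blast
    have "LQ (ind_le X (LQ X - \<epsilon>)) \<le> P (ind_le X (LQ X - \<epsilon>))"
      by (rule LQ_le[OF gamble_ind_le P(1)])
    also have "\<dots> \<le> (P (\<lambda>w. (X w)^2) - (P X)^2 + u^2) / (\<epsilon> + u)^2"
      by (rule cantelli_le[OF Pd X e u0]) (use LQ_le[OF X P(1)] in auto)
    also have "\<dots> \<le> h \<delta>" unfolding h_def
      by (rule divide_right_mono) (use var_le[OF Pd X, of c] c P in auto)
    finally show "LQ (ind_le X (LQ X - \<epsilon>)) \<le> h \<delta>" .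
  next
    have "(h \<longlongrightarrow> h 0) (at 0)" unfolding h_def
      by (intro tendsto_intros) (use e u0 in auto)
    then show "(h \<longlongrightarrow> h 0) (at_right 0)" using filterlim_at_split by blast
  qed
  also have "h 0 = V / (V + \<epsilon>^2)" unfolding h_def u_def using f_ident[OF V0 e] by simp
  finally show ?thesis unfolding V_def .
qed

lemma claimB2: assumes X: "gamble X" and e: "\<epsilon> > 0"
  shows "LQ (ind_ge X (upper LQ X + \<epsilon>)) \<le> lower_var LQ X / (lower_var LQ X + \<epsilon>\<^sup>2)"
proof -
  define V where "V = lower_var LQ X"
  define u where "u = V / \<epsilon>"
  have V0: "V \<ge> 0" using lvar_nn[OF X] V_def by simp
  have u0: "u \<ge> 0" using V0 e u_def by simp
  define h where "h = (\<lambda>\<delta>. (V + \<delta> + \<delta> + u^2) / (\<epsilon> + u)^2)"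
  have "LQ (ind_ge X (upper LQ X + \<epsilon>)) \<le> h 0"
  proof (rule lim_le[OF e])
    fix \<delta> :: real assume d: "0 < \<delta>" "\<delta> < \<epsilon>"
    obtain c where c: "LQ (\<lambda>w. (X w - c)^2) < V + \<delta>" using lvar_approx[OF X d(1)] V_def by blast
    obtain P where P: "P \<in> M" "P (\<lambda>w. (X w - c)^2) < LQ (\<lambda>w. (X w - c)^2) + \<delta>"
      using LQ_approx[OF gamble_sq[OF X] d(1)] by blast
    have Pd: "dF_coherent {Y. gamble Y} P" using Mdf P by blast
    have "LQ (ind_ge X (upper LQ X + \<epsilon>)) \<le> P (ind_ge X (upper LQ X + \<epsilon>))"
      by (rule LQ_le[OF gamble_ind_ge P(1)])
    also have "\<dots> \<le> (P (\<lambda>w. (X w)^2) - (P X)^2 + u^2) / (\<epsilon> + u)^2"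
      by (rule cantelli_ge[OF Pd X e u0]) (use up_ge[OF X P(1)] in auto)
    also have "\<dots> \<le> h \<delta>" unfolding h_def
      by (rule divide_right_mono) (use var_le[OF Pd X, of c] c P in auto)
    finally show "LQ (ind_ge X (upper LQ X + \<epsilon>)) \<le> h \<delta>" .
  next
    have "(h \<longlongrightarrow> h 0) (at 0)" unfolding h_def
      by (intro tendsto_intros) (use e u0 in auto)
    then show "(h \<longlongrightarrow> h 0) (at_right 0)" using filterlim_at_split by blast
  qed
  also have "h 0 = V / (V + \<epsilon>^2)" unfolding h_def u_def using f_ident[OF V0 e] by simp
  finally show ?thesis unfolding V_def .
qed

end


theorem proposition5:
  fixes X :: "'w \<Rightarrow> real" and \<epsilon> :: real
    and LP LQ :: "('w \<Rightarrow> real) \<Rightarrow> real"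
  assumes X: "gamble X"
    and eps: "\<epsilon> > 0"
    and Q: "coherent_lp {Y. gamble Y} LQ"
  shows
   "(let D = {X, (\<lambda>w. - X w), ind_le X (LP X - \<epsilon>), ind_le X (upper LP X - \<epsilon>)} in
      coherent_lp D LP \<and> (\<forall>Y\<in>D. LQ Y = LP Y) \<longrightarrow>
        LP (ind_le X (upper LP X - \<epsilon>)) \<le> upper_var LQ X / (upper_var LQ X + \<epsilon>\<^sup>2) \<and>
        LP (ind_le X (LP X - \<epsilon>)) \<le> lower_var LQ X / (lower_var LQ X + \<epsilon>\<^sup>2))
    \<and>
    (let D = {X, (\<lambda>w. - X w), ind_ge X (LP X + \<epsilon>), ind_ge X (upper LP X + \<epsilon>)} in
      coherent_lp D LP \<and> (\<forall>Y\<in>D. LQ Y = LP Y) \<longrightarrow>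
        LP (ind_ge X (LP X + \<epsilon>)) \<le> upper_var LQ X / (upper_var LQ X + \<epsilon>\<^sup>2) \<and>
        LP (ind_ge X (upper LP X + \<epsilon>)) \<le> lower_var LQ X / (lower_var LQ X + \<epsilon>\<^sup>2))"
  proof -
  obtain M where Mne: "M \<noteq> {}" and Mdf: "\<forall>P\<in>M. dF_coherent {Y. gamble Y} P"
    and LQdef: "\<forall>Y\<in>{Y. gamble Y}. LQ Y = (INF P\<in>M. P Y)"
    using Q unfolding coherent_lp_def by blast
  note A1 = claimA1[OF Mne Mdf LQdef X eps]
  note A2 = claimA2[OF Mne Mdf LQdef X eps]
  note B1 = claimB1[OF Mne Mdf LQdef X eps]
  note B2 = claimB2[OF Mne Mdf LQdef X eps]
  show ?thesis
  proof (intro conjI)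
    show "let D = {X, (\<lambda>w. - X w), ind_le X (LP X - \<epsilon>), ind_le X (upper LP X - \<epsilon>)} in
      coherent_lp D LP \<and> (\<forall>Y\<in>D. LQ Y = LP Y) \<longrightarrow>
        LP (ind_le X (upper LP X - \<epsilon>)) \<le> upper_var LQ X / (upper_var LQ X + \<epsilon>\<^sup>2) \<and>
        LP (ind_le X (LP X - \<epsilon>)) \<le> lower_var LQ X / (lower_var LQ X + \<epsilon>\<^sup>2)"
      unfolding Let_def
    proof (intro impI)
      assume "coherent_lp {X, (\<lambda>w. - X w), ind_le X (LP X - \<epsilon>), ind_le X (upper LP X - \<epsilon>)} LP \<and>
        (\<forall>Y\<in>{X, (\<lambda>w. - X w), ind_le X (LP X - \<epsilon>), ind_le X (upper LP X - \<epsilon>)}. LQ Y = LP Y)"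
      then have h: "LQ X = LP X" "LQ (\<lambda>w. - X w) = LP (\<lambda>w. - X w)"
        "LQ (ind_le X (LP X - \<epsilon>)) = LP (ind_le X (LP X - \<epsilon>))"
        "LQ (ind_le X (upper LP X - \<epsilon>)) = LP (ind_le X (upper LP X - \<epsilon>))" by auto
      have u: "upper LP X = upper LQ X" using h(2) by (simp add: upper_def)
      show "LP (ind_le X (upper LP X - \<epsilon>)) \<le> upper_var LQ X / (upper_var LQ X + \<epsilon>\<^sup>2) \<and>
        LP (ind_le X (LP X - \<epsilon>)) \<le> lower_var LQ X / (lower_var LQ X + \<epsilon>\<^sup>2)"
        using A1 A2 h u by metis
    qed
  next
    show "let D = {X, (\<lambda>w. - X w), ind_ge X (LP X + \<epsilon>), ind_ge X (upper LP X + \<epsilon>)} in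
      coherent_lp D LP \<and> (\<forall>Y\<in>D. LQ Y = LP Y) \<longrightarrow>
        LP (ind_ge X (LP X + \<epsilon>)) \<le> upper_var LQ X / (upper_var LQ X + \<epsilon>\<^sup>2) \<and>
        LP (ind_ge X (upper LP X + \<epsilon>)) \<le> lower_var LQ X / (lower_var LQ X + \<epsilon>\<^sup>2)"
      unfolding Let_def
    proof (intro impI)
      assume "coherent_lp {X, (\<lambda>w. - X w), ind_ge X (LP X + \<epsilon>), ind_ge X (upper LP X + \<epsilon>)} LP \<and>
        (\<forall>Y\<in>{X, (\<lambda>w. - X w), ind_ge X (LP X + \<epsilon>), ind_ge X (upper LP X + \<epsilon>)}. LQ Y = LP Y)"
      then have h: "LQ X = LP X" "LQ (\<lambda>w. - X w) = LP (\<lambda>w. - X w)"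
        "LQ (ind_ge X (LP X + \<epsilon>)) = LP (ind_ge X (LP X + \<epsilon>))"
        "LQ (ind_ge X (upper LP X + \<epsilon>)) = LP (ind_ge X (upper LP X + \<epsilon>))" by auto
      have u: "upper LP X = upper LQ X" using h(2) by (simp add: upper_def)
      show "LP (ind_ge X (LP X + \<epsilon>)) \<le> upper_var LQ X / (upper_var LQ X + \<epsilon>\<^sup>2) \<and>
        LP (ind_ge X (upper LP X + \<epsilon>)) \<le> lower_var LQ X / (lower_var LQ X + \<epsilon>\<^sup>2)"
        using B1 B2 h u by metis
    qed
  qed
qed

end
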